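(* Let $S$ be a compact topological space and let $g\in\mathscr{C}(S)[x_1,\dots,x_n]$ be such that $g_s$ is not the zero polynomial for every $s\in S$. Then $FRad(\langle g\rangle)=\sqrt{\langle g\rangle}$ as presheaves, i.e. $FRad(\langle g\rangle)(U)=\sqrt{\langle g\rangle}(U)$ for every open $U\subseteq S$.
   Context: For $U\subseteq S$ open, $\mathscr{C}(U)$ is the ring of continuous complex-valued functions on $U$. For $f=\sum_\alpha a_\alpha x^\alpha\in\mathscr{C}(U)[x_1,\dots,x_n]$ and $s\in U$, $f_s=\sum_\alpha a_\alpha(s)x^\alpha\in\mathbb{C}[x_1,\dots,x_n]$. $\langle g\rangle(U)$ is the ideal of $\mathscr{C}(U)[x_1,\dots,x_n]$ generated by $g|_U$, and $\langle g\rangle(U)|_s=\{h_s:h\in\langle g\rangle(U)\}$. Define $\sqrt{\langle g\rangle}(U)=\{f\in\mathscr{C}(U)[x_1,\dots,x_n]: f^m\in\langle g\rangle(U)\text{ for some } m\in\mathbb{N}\}$ and $FRad(\langle g\rangle)(U)=\{f\in\mathscr{C}(U)[x_1,\dots,x_n]: f_s\in\sqrt{\langle g\rangle(U)|_s}\text{ for all }s\in U\}$. *)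

theory Defs
  imports "HOL-Analysis.Analysis" "HOL-Library.Poly_Mapping"
begin

text \<open>Multivariate complex polynomials in the variables x_1..x_n are represented as
  poly_mappings from monomials (exponent vectors, variable x_(i+1) has index i)
  to complex coefficients, with all monomials involving only indices < n.\<close>

type_synonym mpoly = "((nat, nat) poly_mapping, complex) poly_mapping"

definition in_vars :: "nat \<Rightarrow> mpoly \<Rightarrow> bool" where
  "in_vars n p \<longleftrightarrow> (\<forall>a. a \<in> Poly_Mapping.keys p \<longrightarrow> Poly_Mapping.keys (a::(nat, nat) poly_mapping) \<subseteq> {..<n})"

text \<open>An element f = sum a_alpha x^alpha of C(U)[x_1..x_n] is represented by the map
  s \<mapsto> f_s (extended by 0 outside U): finitely many monomials overall, all
  coefficient functions continuous on U.\<close>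

definition cpolys :: "nat \<Rightarrow> 's topology \<Rightarrow> 's set \<Rightarrow> ('s \<Rightarrow> mpoly) set" where
  "cpolys n X U = {f. (\<forall>s. s \<notin> U \<longrightarrow> f s = 0)
      \<and> finite (\<Union>s\<in>U. Poly_Mapping.keys (f s))
      \<and> (\<forall>s\<in>U. in_vars n (f s))
      \<and> (\<forall>\<alpha>. continuous_map (subtopology X U) euclidean (\<lambda>s. Poly_Mapping.lookup (f s) \<alpha>))}"

definition restr :: "'s set \<Rightarrow> ('s \<Rightarrow> mpoly) \<Rightarrow> ('s \<Rightarrow> mpoly)" where
  "restr U g = (\<lambda>s. if s \<in> U then g s else 0)"

definition cpow :: "'s set \<Rightarrow> ('s \<Rightarrow> mpoly) \<Rightarrow> nat \<Rightarrow> ('s \<Rightarrow> mpoly)" where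
  "cpow U f m = (\<lambda>s. if s \<in> U then f s ^ m else 0)"

definition gen_ideal :: "nat \<Rightarrow> 's topology \<Rightarrow> ('s \<Rightarrow> mpoly) \<Rightarrow> 's set \<Rightarrow> ('s \<Rightarrow> mpoly) set" where
  "gen_ideal n X g U = {(\<lambda>s. h s * restr U g s) | h. h \<in> cpolys n X U}"

definition ideal_at :: "nat \<Rightarrow> 's topology \<Rightarrow> ('s \<Rightarrow> mpoly) \<Rightarrow> 's set \<Rightarrow> 's \<Rightarrow> mpoly set" where
  "ideal_at n X g U s = {h s | h. h \<in> gen_ideal n X g U}"

definition poly_radical :: "mpoly set \<Rightarrow> mpoly set" where
  "poly_radical I = {p. \<exists>m::nat. p ^ m \<in> I}"

definition sqrt_ideal :: "nat \<Rightarrow> 's topology \<Rightarrow> ('s \<Rightarrow> mpoly) \<Rightarrow> 's set \<Rightarrow> ('s \<Rightarrow> mpoly) set" where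
  "sqrt_ideal n X g U = {f \<in> cpolys n X U. \<exists>m::nat. cpow U f m \<in> gen_ideal n X g U}"

definition FRad :: "nat \<Rightarrow> 's topology \<Rightarrow> ('s \<Rightarrow> mpoly) \<Rightarrow> 's set \<Rightarrow> ('s \<Rightarrow> mpoly) set" where
  "FRad n X g U = {f \<in> cpolys n X U. \<forall>s\<in>U. f s \<in> poly_radical (ideal_at n X g U s)}"

end

theory Submission
  imports Defs "HOL-Computational_Algebra.Polynomial_Factorial" "HOL-Computational_Algebra.Field_as_Ring"
begin


abbreviation (input) lk where "lk \<equiv> Poly_Mapping.lookup"
abbreviation (input) ks where "ks \<equiv> Poly_Mapping.keys"
abbreviation (input) sg where "sg \<equiv> Poly_Mapping.single"

lemma pm_expand_superset:
  fixes p :: "'a \<Rightarrow>\<^sub>0 'b::comm_monoid_add"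
  assumes "finite A" "ks p \<subseteq> A"
  shows "p = (\<Sum>\<alpha>\<in>A. sg \<alpha> (lk p \<alpha>))"
proof (rule poly_mapping_eqI)
  fix k
  have "lk (\<Sum>\<alpha>\<in>A. sg \<alpha> (lk p \<alpha>)) k = (\<Sum>\<alpha>\<in>A. if \<alpha> = k then lk p \<alpha> else 0)"
    by (simp add: lookup_sum lookup_single when_def)
  also have "\<dots> = lk p k"
    using assms by (auto simp: sum.delta in_keys_iff)
  finally show "lk p k = lk (\<Sum>\<alpha>\<in>A. sg \<alpha> (lk p \<alpha>)) k" by simp
qed

lemma pm_expand:
  fixes p :: "'a \<Rightarrow>\<^sub>0 'b::comm_monoid_add"
  shows "p = (\<Sum>\<alpha>\<in>ks p. sg \<alpha> (lk p \<alpha>))"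
  by (rule pm_expand_superset) auto

lemma mult_expand_superset:
  fixes p q :: "'a::comm_monoid_add \<Rightarrow>\<^sub>0 'b::comm_semiring_1"
  assumes "finite A" "ks p \<subseteq> A" "finite B" "ks q \<subseteq> B"
  shows "p * q = (\<Sum>a\<in>A. \<Sum>b\<in>B. sg (a+b) (lk p a * lk q b))"
proof -
  have "p * q = (\<Sum>a\<in>A. sg a (lk p a)) * (\<Sum>b\<in>B. sg b (lk q b))"
    using pm_expand_superset[OF assms(1,2)] pm_expand_superset[OF assms(3,4)] by simp
  also have "\<dots> = (\<Sum>a\<in>A. \<Sum>b\<in>B. sg a (lk p a) * sg b (lk q b))"
    by (simp add: sum_distrib_left sum_distrib_right sum.swap[of _ B A])
  finally show ?thesis by (simp add: mult_single)
qed

lemma lookup_mult_superset: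
  fixes p q :: "'a::comm_monoid_add \<Rightarrow>\<^sub>0 'b::comm_semiring_1"
  assumes "finite A" "ks p \<subseteq> A" "finite B" "ks q \<subseteq> B"
  shows "lk (p * q) k = (\<Sum>a\<in>A. \<Sum>b\<in>B. if a + b = k then lk p a * lk q b else 0)"
  by (subst mult_expand_superset[OF assms]) (simp add: lookup_sum lookup_single when_def)

definition chom :: "('a::comm_ring_1 \<Rightarrow> 'b::comm_ring_1) \<Rightarrow> bool" where
  "chom h \<longleftrightarrow> h 0 = 0 \<and> h 1 = 1 \<and> (\<forall>a b. h (a + b) = h a + h b) \<and> (\<forall>a b. h (a * b) = h a * h b)"

lemma chomD:
  assumes "chom h"
  shows "h 0 = 0" "h 1 = 1" "h (a + b) = h a + h b" "h (a * b) = h a * h b"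
  using assms by (auto simp: chom_def)

lemma chom_minus: assumes "chom h" shows "h (- a) = - h a"
proof -
  have "h a + h (-a) = 0" using chomD(3)[OF assms, of a "-a"] chomD(1)[OF assms] by simp
  then show ?thesis by (simp add: eq_neg_iff_add_eq_0 add.commute)
qed

lemma chom_diff: "chom h \<Longrightarrow> h (a - b) = h a - h b"
  using chomD(3)[of h a "-b"] chom_minus[of h b] by simp

lemma chom_sum: "chom h \<Longrightarrow> h (sum f A) = (\<Sum>x\<in>A. h (f x))"
  by (induction A rule: infinite_finite_induct) (auto simp: chomD)

lemma chom_prod: "chom h \<Longrightarrow> h (prod f A) = (\<Prod>x\<in>A. h (f x))"
  by (induction A rule: infinite_finite_induct) (auto simp: chomD)

lemma chom_power: "chom h \<Longrightarrow> h (a ^ k) = h a ^ k"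
  by (induction k) (auto simp: chomD)

lemma chom_comp: "chom h \<Longrightarrow> chom k \<Longrightarrow> chom (k \<circ> h)"
  by (auto simp: chom_def)

lemma chom_id: "chom id"
  by (auto simp: chom_def)

lemma chom_dvd: assumes "chom h" "a dvd b" shows "h a dvd h b"
proof -
  from assms(2) obtain c where "b = a * c" by (auto simp: dvd_def)
  then have "h b = h a * h c" using chomD(4)[OF assms(1)] by simp
  then show ?thesis by simp
qed

definition mono_eval :: "(nat \<Rightarrow> 'b::comm_semiring_1) \<Rightarrow> (nat \<Rightarrow>\<^sub>0 nat) \<Rightarrow> 'b" where
  "mono_eval \<sigma> \<alpha> = (\<Prod>i\<in>ks \<alpha>. \<sigma> i ^ lk \<alpha> i)"

lemma mono_eval_superset:
  assumes "finite A" "ks \<alpha> \<subseteq> A"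
  shows "mono_eval \<sigma> \<alpha> = (\<Prod>i\<in>A. \<sigma> i ^ lk \<alpha> i)"
  unfolding mono_eval_def
  by (rule prod.mono_neutral_left) (use assms in \<open>auto simp: in_keys_iff\<close>)

lemma mono_eval_add: "mono_eval \<sigma> (\<alpha> + \<beta>) = mono_eval \<sigma> \<alpha> * mono_eval \<sigma> \<beta>"
proof -
  let ?A = "ks \<alpha> \<union> ks \<beta>"
  have k: "ks (\<alpha> + \<beta>) \<subseteq> ?A" by (rule keys_add)
  have "mono_eval \<sigma> (\<alpha> + \<beta>) = (\<Prod>i\<in>?A. \<sigma> i ^ lk (\<alpha>+\<beta>) i)"
    by (rule mono_eval_superset) (use k in auto)
  also have "\<dots> = (\<Prod>i\<in>?A. \<sigma> i ^ lk \<alpha> i) * (\<Prod>i\<in>?A. \<sigma> i ^ lk \<beta> i)"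
    by (simp add: lookup_add power_add prod.distrib)
  also have "\<dots> = mono_eval \<sigma> \<alpha> * mono_eval \<sigma> \<beta>"
    using mono_eval_superset[of "ks \<alpha> \<union> ks \<beta>" \<alpha> \<sigma>] mono_eval_superset[of "ks \<alpha> \<union> ks \<beta>" \<beta> \<sigma>] by simp
  finally show ?thesis .
qed

lemma mono_eval_zero [simp]: "mono_eval \<sigma> 0 = 1"
  by (simp add: mono_eval_def)

definition msubst :: "(complex \<Rightarrow> 'b::comm_ring_1) \<Rightarrow> (nat \<Rightarrow> 'b) \<Rightarrow> mpoly \<Rightarrow> 'b" where
  "msubst \<phi> \<sigma> p = (\<Sum>\<alpha>\<in>ks p. \<phi> (lk p \<alpha>) * mono_eval \<sigma> \<alpha>)"

lemma msubst_superset: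
  assumes "\<phi> 0 = 0" "finite A" "ks p \<subseteq> A"
  shows "msubst \<phi> \<sigma> p = (\<Sum>\<alpha>\<in>A. \<phi> (lk p \<alpha>) * mono_eval \<sigma> \<alpha>)"
  unfolding msubst_def
  by (rule sum.mono_neutral_left) (use assms in \<open>auto simp: in_keys_iff\<close>)

lemma msubst_add:
  assumes "chom \<phi>"
  shows "msubst \<phi> \<sigma> (p + q) = msubst \<phi> \<sigma> p + msubst \<phi> \<sigma> q"
proof -
  let ?A = "ks p \<union> ks q"
  have "msubst \<phi> \<sigma> (p + q) = (\<Sum>\<alpha>\<in>?A. \<phi> (lk (p+q) \<alpha>) * mono_eval \<sigma> \<alpha>)"
    by (rule msubst_superset) (use assms keys_add[of p q] in \<open>auto simp: chomD\<close>)
  also have "\<dots> = (\<Sum>\<alpha>\<in>?A. \<phi> (lk p \<alpha>) * mono_eval \<sigma> \<alpha>) + (\<Sum>\<alpha>\<in>?A. \<phi> (lk q \<alpha>) * mono_eval \<sigma> \<alpha>)"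
    using assms by (simp add: lookup_add chomD distrib_right sum.distrib)
  also have "\<dots> = msubst \<phi> \<sigma> p + msubst \<phi> \<sigma> q"
    using msubst_superset[of \<phi> ?A p \<sigma>] msubst_superset[of \<phi> ?A q \<sigma>] assms by (simp add: chomD)
  finally show ?thesis .
qed

lemma msubst_zero: "msubst \<phi> \<sigma> 0 = 0"
  by (simp add: msubst_def)

lemma msubst_sum:
  assumes "chom \<phi>"
  shows "msubst \<phi> \<sigma> (sum f A) = (\<Sum>x\<in>A. msubst \<phi> \<sigma> (f x))"
  by (induction A rule: infinite_finite_induct) (auto simp: msubst_zero msubst_add[OF assms])

lemma msubst_single:
  assumes "chom \<phi>"
  shows "msubst \<phi> \<sigma> (sg \<alpha> c) = \<phi> c * mono_eval \<sigma> \<alpha>"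
  using assms by (cases "c = 0") (auto simp: msubst_def chomD)

lemma msubst_mult:
  assumes "chom \<phi>"
  shows "msubst \<phi> \<sigma> (p * q) = msubst \<phi> \<sigma> p * msubst \<phi> \<sigma> q"
proof -
  have "msubst \<phi> \<sigma> (p * q) = (\<Sum>a\<in>ks p. \<Sum>b\<in>ks q. \<phi> (lk p a * lk q b) * mono_eval \<sigma> (a + b))"
    by (subst mult_expand_superset[of "ks p" p "ks q" q]) (auto simp: msubst_sum[OF assms] msubst_single[OF assms])
  also have "\<dots> = (\<Sum>a\<in>ks p. \<Sum>b\<in>ks q. (\<phi> (lk p a) * mono_eval \<sigma> a) * (\<phi> (lk q b) * mono_eval \<sigma> b))"
    using assms by (simp add: chomD mono_eval_add mult_ac)
  also have "\<dots> = msubst \<phi> \<sigma> p * msubst \<phi> \<sigma> q"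
    by (simp add: msubst_def sum_distrib_left sum_distrib_right sum.swap[of _ "ks q" "ks p"])
  finally show ?thesis .
qed

lemma msubst_one:
  assumes "chom \<phi>"
  shows "msubst \<phi> \<sigma> 1 = 1"
proof -
  have "msubst \<phi> \<sigma> (sg 0 1) = \<phi> 1 * mono_eval \<sigma> 0" by (rule msubst_single[OF assms])
  then show ?thesis using assms by (simp add: chomD)
qed

lemma chom_msubst: "chom \<phi> \<Longrightarrow> chom (msubst \<phi> \<sigma>)"
  unfolding chom_def[of "msubst \<phi> \<sigma>"]
  by (auto simp: msubst_zero msubst_one msubst_add msubst_mult)

definition Xv :: "nat \<Rightarrow> mpoly" where "Xv i = sg (sg i 1) 1"
definition cst :: "complex \<Rightarrow> mpoly" where "cst c = sg 0 c"

lemma chom_cst: "chom cst"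
  by (auto simp: chom_def cst_def single_add mult_single)

lemma Xv_power: "Xv i ^ k = sg (sg i k) 1"
  by (induction k) (auto simp: Xv_def mult_single single_add[symmetric] add.commute)

lemma prod_single:
  fixes f :: "'c \<Rightarrow> 'a::comm_monoid_add" and g :: "'c \<Rightarrow> 'b::comm_semiring_1"
  shows "(\<Prod>i\<in>A. sg (f i) (g i)) = sg (\<Sum>i\<in>A. f i) (\<Prod>i\<in>A. g i)"
  by (induction A rule: infinite_finite_induct) (auto simp: mult_single)

lemma mono_eval_Xv: "mono_eval Xv \<alpha> = sg \<alpha> 1"
proof -
  have "mono_eval Xv \<alpha> = (\<Prod>i\<in>ks \<alpha>. sg (sg i (lk \<alpha> i)) 1)"
    by (simp add: mono_eval_def Xv_power)
  also have "\<dots> = sg (\<Sum>i\<in>ks \<alpha>. sg i (lk \<alpha> i)) 1"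
    by (simp add: prod_single)
  also have "(\<Sum>i\<in>ks \<alpha>. sg i (lk \<alpha> i)) = \<alpha>"
    by (rule pm_expand[symmetric])
  finally show ?thesis .
qed

lemma msubst_cst_Xv: "msubst cst Xv p = p"
proof -
  have "msubst cst Xv p = (\<Sum>\<alpha>\<in>ks p. sg \<alpha> (lk p \<alpha>))"
    by (simp add: msubst_def mono_eval_Xv cst_def mult_single)
  also have "\<dots> = p" by (rule pm_expand[symmetric])
  finally show ?thesis .
qed

lemma hom_unique:
  fixes h :: "mpoly \<Rightarrow> 'b::comm_ring_1"
  assumes "chom h"
  shows "h p = msubst (h \<circ> cst) (h \<circ> Xv) p"
proof -
  have "h p = h (msubst cst Xv p)" by (simp add: msubst_cst_Xv)
  also have "\<dots> = (\<Sum>\<alpha>\<in>ks p. h (cst (lk p \<alpha>)) * h (mono_eval Xv \<alpha>))"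
    by (simp add: msubst_def chom_sum[OF assms] chomD[OF assms])
  also have "\<dots> = msubst (h \<circ> cst) (h \<circ> Xv) p"
    by (simp add: msubst_def mono_eval_def chom_prod[OF assms] chom_power[OF assms])
  finally show ?thesis .
qed

lemma hom_eqI:
  fixes h k :: "mpoly \<Rightarrow> 'b::comm_ring_1"
  assumes "chom h" "chom k" "\<And>c. h (cst c) = k (cst c)" "\<And>i. h (Xv i) = k (Xv i)"
  shows "h p = k p"
  using hom_unique[OF assms(1), of p] hom_unique[OF assms(2), of p] assms(3,4)
  by (simp add: comp_def)

lemma msubst_cst: "chom \<phi> \<Longrightarrow> msubst \<phi> \<sigma> (cst c) = \<phi> c"
  by (simp add: cst_def msubst_single)

lemma msubst_Xv: "chom \<phi> \<Longrightarrow> msubst \<phi> \<sigma> (Xv i) = \<sigma> i"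
  by (simp add: Xv_def msubst_single chomD mono_eval_def)


lemma map_poly_add_hom:
  assumes "\<And>a b. h (a + b) = h a + h b" "h 0 = 0"
  shows "map_poly h (p + q) = map_poly h p + map_poly h q"
  by (rule poly_eqI) (simp add: coeff_map_poly assms)

lemma map_poly_mult_hom:
  fixes h :: "'a::comm_ring_1 \<Rightarrow> 'b::comm_ring_1"
  assumes "\<And>a b. h (a + b) = h a + h b" "\<And>a b. h (a * b) = h a * h b" "h 0 = 0"
  shows "map_poly h (p * q) = map_poly h p * map_poly h q"
proof (rule poly_eqI)
  fix n
  have hs: "h (sum f A) = (\<Sum>x\<in>A. h (f x))" for f :: "nat \<Rightarrow> 'a" and A
    by (induction A rule: infinite_finite_induct) (auto simp: assms)
  show "coeff (map_poly h (p * q)) n = coeff (map_poly h p * map_poly h q) n"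
    by (simp add: coeff_map_poly assms coeff_mult hs)
qed

lemma univ_rad_bound:
  fixes P Q :: "complex poly"
  assumes "Q \<noteq> 0" "Q dvd P ^ k"
  shows "Q dvd P ^ degree Q"
proof (cases "P = 0")
  case True
  show ?thesis
  proof (cases "degree Q = 0")
    case True
    then have "is_unit Q" using assms(1) by (simp add: is_unit_iff_degree)
    then show ?thesis by auto
  next
    case False
    then show ?thesis using \<open>P = 0\<close> by (simp add: zero_power)
  qed
next
  case False
  note P0 = this
  show ?thesis
  proof (rule multiplicity_le_imp_dvd)
    show "Q \<noteq> 0" by (rule assms(1))
  next
    fix p :: "complex poly" assume pr: "prime p"
    have nu: "\<not> is_unit p" using pr by (simp add: prime_def prime_elem_def)
    show "multiplicity p Q \<le> multiplicity p (P ^ degree Q)"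
    proof (cases "p dvd Q")
      case False
      then have "multiplicity p Q = 0" using multiplicity_eq_zero_iff[OF assms(1) nu] by simp
      then show ?thesis by simp
    next
      case True
      then have "p dvd P ^ k" using assms(2) dvd_trans by blast
      then have "p dvd P" using pr prime_dvd_power by blast
      then have m1: "multiplicity p P \<ge> 1" using multiplicity_gt_zero_iff[OF P0 nu] by simp
      have "multiplicity p (P ^ degree Q) = degree Q * multiplicity p P"
        using pr P0 by (simp add: prime_elem_multiplicity_power_distrib)
      also have "\<dots> \<ge> degree Q" using m1 by simp
      finally have A: "degree Q \<le> multiplicity p (P ^ degree Q)" .
      have "p ^ multiplicity p Q dvd Q" by (rule multiplicity_dvd)
      then have "degree (p ^ multiplicity p Q) \<le> degree Q"
        using assms(1) by (rule dvd_imp_degree_le)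
      moreover have "p \<noteq> 0" using pr by auto
      moreover have "degree p \<ge> 1"
      proof (rule ccontr)
        assume "\<not> degree p \<ge> 1"
        then have "degree p = 0" by simp
        then have "is_unit p" using \<open>p \<noteq> 0\<close> by (simp add: is_unit_iff_degree)
        then show False using pr by (simp add: prime_def prime_elem_def)
      qed
      ultimately have "multiplicity p Q * 1 \<le> degree Q"
        by (metis degree_power_eq le_trans mult_le_mono2)
      then show ?thesis using A by simp
    qed
  qed
qed


lemma digits_bound:
  fixes a :: "nat \<Rightarrow> nat"
  assumes "\<forall>i<n. a i < B"
  shows "(\<Sum>i<n. a i * B ^ i) < B ^ n"
  using assms
proof (induction n)
  case 0
  then show ?case by simp
next
  case (Suc n)
  have S: "(\<Sum>i<n. a i * B ^ i) < B ^ n" using Suc by auto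
  have an: "a n + 1 \<le> B" using Suc.prems by auto
  have "(\<Sum>i<Suc n. a i * B ^ i) = (\<Sum>i<n. a i * B ^ i) + a n * B ^ n" by simp
  also have "\<dots> < B ^ n + a n * B ^ n" using S by simp
  also have "\<dots> = (a n + 1) * B ^ n" by simp
  also have "\<dots> \<le> B * B ^ n" using an by (rule mult_right_mono) simp
  finally show ?case by simp
qed

lemma digits_inj:
  fixes a b :: "nat \<Rightarrow> nat"
  assumes "\<forall>i<n. a i < B" "\<forall>i<n. b i < B" "(\<Sum>i<n. a i * B ^ i) = (\<Sum>i<n. b i * B ^ i)"
  shows "\<forall>i<n. a i = b i"
  using assms
proof (induction n)
  case 0
  then show ?case by simp
next
  case (Suc n)
  let ?Sa = "\<Sum>i<n. a i * B ^ i" and ?Sb = "\<Sum>i<n. b i * B ^ i"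
  have Sa: "?Sa < B ^ n" using Suc.prems by (intro digits_bound) auto
  have Sb: "?Sb < B ^ n" using Suc.prems by (intro digits_bound) auto
  have "a n < B" using Suc.prems(1) by simp
  then have B0: "B > 0" by simp
  then have P: "B ^ n > 0" by simp
  have eq: "?Sa + a n * B ^ n = ?Sb + b n * B ^ n" using Suc.prems(3) by simp
  have "(?Sa + a n * B ^ n) div B ^ n = a n + ?Sa div B ^ n"
    using P by (intro div_mult_self1) simp
  then have 1: "(?Sa + a n * B ^ n) div B ^ n = a n" using Sa by (simp add: div_less)
  have "(?Sb + b n * B ^ n) div B ^ n = b n + ?Sb div B ^ n"
    using P by (intro div_mult_self1) simp
  then have 2: "(?Sb + b n * B ^ n) div B ^ n = b n" using Sb by (simp add: div_less)
  have abn: "a n = b n" using eq 1 2 by simp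
  then have "?Sa = ?Sb" using eq by simp
  then have IH: "\<forall>i<n. a i = b i"
    using Suc.IH[OF _ _ \<open>?Sa = ?Sb\<close>] Suc.prems(1,2) by simp
  show ?case
  proof (intro allI impI)
    fix i assume "i < Suc n"
    then consider "i < n" | "i = n" by linarith
    then show "a i = b i" using IH abn by cases auto
  qed
qed

lemma sum_strict_max_degree:
  fixes F :: "'c \<Rightarrow> 'a::comm_ring_1 poly"
  assumes "finite A" "a \<in> A" "\<forall>b\<in>A - {a}. degree (F b) < degree (F a)"
  shows "degree (sum F A) = degree (F a) \<and> lead_coeff (sum F A) = lead_coeff (F a)"
proof (cases "A - {a} = {}")
  case True
  then have "A = {a}" using assms(2) by auto
  then show ?thesis by simp
next
  case False
  then obtain b where "b \<in> A - {a}" by auto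
  then have pos: "degree (F a) > 0" using assms(3) by fastforce
  have R: "degree (sum F (A - {a})) < degree (F a)"
  proof -
    have "degree (sum F (A - {a})) \<le> degree (F a) - 1"
    proof (rule degree_sum_le)
      fix p assume "p \<in> A - {a}"
      then have "degree (F p) < degree (F a)" using assms by auto
      then show "degree (F p) \<le> degree (F a) - 1" by simp
    qed (use assms in auto)
    then show ?thesis using pos by simp
  qed
  have eq: "sum F A = F a + sum F (A - {a})"
    using assms(1,2) by (simp add: sum.remove)
  show ?thesis
    unfolding eq using R degree_add_eq_left[OF R] lead_coeff_add_le[OF R]
    by (simp add: add.commute)
qed


definition wt :: "nat \<Rightarrow> (nat \<Rightarrow>\<^sub>0 nat) \<Rightarrow> nat" where
  "wt B \<alpha> = (\<Sum>i\<in>ks \<alpha>. lk \<alpha> i * B ^ i)"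

lemma wt_superset: "finite A \<Longrightarrow> ks \<alpha> \<subseteq> A \<Longrightarrow> wt B \<alpha> = (\<Sum>i\<in>A. lk \<alpha> i * B ^ i)"
  unfolding wt_def by (rule sum.mono_neutral_left) (auto simp: in_keys_iff)

lemma wt_inj:
  assumes "ks \<alpha> \<subseteq> {..<n}" "ks \<beta> \<subseteq> {..<n}" "\<forall>i. lk \<alpha> i < B" "\<forall>i. lk \<beta> i < B"
    and "wt B \<alpha> = wt B \<beta>"
  shows "\<alpha> = \<beta>"
proof -
  have "(\<Sum>i<n. lk \<alpha> i * B ^ i) = (\<Sum>i<n. lk \<beta> i * B ^ i)"
    using assms wt_superset[of "{..<n}" \<alpha> B] wt_superset[of "{..<n}" \<beta> B] by simp
  then have "\<forall>i<n. lk \<alpha> i = lk \<beta> i"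
    using digits_inj[of n "lk \<alpha>" B "lk \<beta>"] assms(3,4) by blast
  moreover have "\<forall>i. i \<ge> n \<longrightarrow> lk \<alpha> i = 0 \<and> lk \<beta> i = 0"
    using assms(1,2) by (auto simp: in_keys_iff)
  ultimately show ?thesis
    by (intro poly_mapping_eqI) (metis not_le)
qed

definition ev :: "(nat \<Rightarrow> complex) \<Rightarrow> mpoly \<Rightarrow> complex" where
  "ev a = msubst id a"

lemma chom_ev: "chom (ev a)"
  unfolding ev_def by (rule chom_msubst[OF chom_id])

lemma ev_single: "ev a (sg \<alpha> c) = c * mono_eval a \<alpha>"
  unfolding ev_def by (simp add: msubst_single[OF chom_id])

lemma exists_vars_bound: "\<exists>n. \<forall>\<alpha>\<in>ks (p::mpoly). ks \<alpha> \<subseteq> {..<n}"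
proof -
  let ?V = "\<Union>\<alpha>\<in>ks p. ks \<alpha>"
  have "finite ?V" by simp
  then obtain n where "\<forall>i\<in>?V. i < n"
    by (metis finite_nat_set_iff_bounded)
  then show ?thesis by auto
qed

lemma exists_exp_bound: "\<exists>B. \<forall>\<alpha>\<in>ks (p::mpoly). \<forall>i. lk \<alpha> i < B"
proof -
  let ?E = "\<Union>\<alpha>\<in>ks p. lk \<alpha> ` ks \<alpha>"
  have "finite ?E" by simp
  then obtain B where B: "\<forall>e\<in>?E. e < B"
    by (metis finite_nat_set_iff_bounded)
  have "lk \<alpha> i < Suc B" if "\<alpha> \<in> ks p" for \<alpha> i
  proof (cases "i \<in> ks \<alpha>")
    case True then show ?thesis using B that by force
  next
    case False then show ?thesis by (simp add: in_keys_iff)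
  qed
  then show ?thesis by blast
qed

lemma identity_thm:
  assumes "\<forall>a. ev a p = 0"
  shows "p = 0"
proof (rule ccontr)
  assume p0: "p \<noteq> 0"
  obtain n where n: "\<forall>\<alpha>\<in>ks p. ks \<alpha> \<subseteq> {..<n}" using exists_vars_bound by blast
  obtain B where B: "\<forall>\<alpha>\<in>ks p. \<forall>i. lk \<alpha> i < B" using exists_exp_bound by blast
  define P :: "complex poly" where "P = (\<Sum>\<alpha>\<in>ks p. monom (lk p \<alpha>) (wt B \<alpha>))"
  have evP: "ev (\<lambda>i. y ^ (B ^ i)) p = poly P y" for y
  proof -
    have me: "mono_eval (\<lambda>i. y ^ (B ^ i)) \<alpha> = y ^ wt B \<alpha>" for \<alpha>
      by (simp add: mono_eval_def wt_def power_sum power_mult[symmetric] mult.commute)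
    have "ev (\<lambda>i. y ^ (B ^ i)) p = (\<Sum>\<alpha>\<in>ks p. ev (\<lambda>i. y ^ (B ^ i)) (sg \<alpha> (lk p \<alpha>)))"
      by (subst pm_expand[of p]) (simp add: chom_sum[OF chom_ev])
    also have "\<dots> = poly P y"
      by (simp add: ev_single me P_def poly_sum poly_monom)
    finally show ?thesis .
  qed
  obtain \<alpha>0 where a0: "\<alpha>0 \<in> ks p" using p0
    by (metis ex_in_conv keys_eq_empty)
  have "coeff P (wt B \<alpha>0) = (\<Sum>\<alpha>\<in>ks p. if wt B \<alpha> = wt B \<alpha>0 then lk p \<alpha> else 0)"
    by (simp add: P_def coeff_sum coeff_monom)
  also have "\<dots> = (\<Sum>\<alpha>\<in>ks p. if \<alpha> = \<alpha>0 then lk p \<alpha> else 0)"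
  proof (rule sum.cong)
    fix \<alpha> assume "\<alpha> \<in> ks p"
    then have "wt B \<alpha> = wt B \<alpha>0 \<longleftrightarrow> \<alpha> = \<alpha>0"
      using wt_inj[of \<alpha> n \<alpha>0 B] n B a0 by auto
    then show "(if wt B \<alpha> = wt B \<alpha>0 then lk p \<alpha> else 0) = (if \<alpha> = \<alpha>0 then lk p \<alpha> else 0)"
      by simp
  qed simp
  also have "\<dots> = lk p \<alpha>0" using a0 by simp
  finally have "coeff P (wt B \<alpha>0) \<noteq> 0" using a0 by (simp add: in_keys_iff)
  then have "P \<noteq> 0" by auto
  then have "finite {y. poly P y = 0}" by (rule poly_roots_finite)
  then obtain y where "poly P y \<noteq> 0"
    by (metis (mono_tags, lifting) UNIV_I infinite_UNIV_char_0 mem_Collect_eq subsetI finite_subset)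
  then show False using assms evP by simp
qed


definition sig :: "nat \<Rightarrow> nat \<Rightarrow> mpoly poly" where
  "sig B i = (if i = 0 then 0 else [:Xv i:]) + monom 1 (B ^ i)"

definition Phi :: "nat \<Rightarrow> mpoly \<Rightarrow> mpoly poly" where
  "Phi B = msubst (\<lambda>c. [:cst c:]) (sig B)"

lemma chom_pconst: "chom (\<lambda>c. [:cst c:])"
  using chom_cst by (auto simp: chom_def)

lemma chom_Phi: "chom (Phi B)"
  unfolding Phi_def by (rule chom_msubst[OF chom_pconst])

lemma sig_deg: assumes "B \<ge> 1" shows "degree (sig B i) = B ^ i \<and> lead_coeff (sig B i) = 1"
proof (cases "i = 0")
  case True then show ?thesis by (simp add: sig_def degree_monom_eq)
next
  case False
  have d: "degree [:Xv i:] < degree (monom (1::mpoly) (B ^ i))"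
    using assms by (simp add: degree_monom_eq)
  show ?thesis using False degree_add_eq_left[OF d] lead_coeff_add_le[OF d]
    by (simp add: sig_def add.commute degree_monom_eq)
qed

lemma mono_sig_deg:
  assumes "B \<ge> 1"
  shows "degree (mono_eval (sig B) \<alpha>) = wt B \<alpha> \<and> lead_coeff (mono_eval (sig B) \<alpha>) = 1"
proof -
  have nz: "sig B i ^ k \<noteq> 0" for i k
    using sig_deg[OF assms, of i] by (metis leading_coeff_0_iff one_neq_zero power_not_zero)
  have lc: "coeff (sig B i) (B ^ i) = 1" for i using sig_deg[OF assms, of i] by metis
  have L: "lead_coeff (mono_eval (sig B) \<alpha>) = 1"
    by (simp add: mono_eval_def lead_coeff_prod lead_coeff_power sig_deg[OF assms] lc)
  have s0: "sig B i \<noteq> 0" for i using sig_deg[OF assms, of i] by auto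
  have dp: "degree (sig B i ^ k) = k * B ^ i" for i k
    using degree_power_eq[OF s0[of i], of k] sig_deg[OF assms, of i] by simp
  have "degree (mono_eval (sig B) \<alpha>) = (\<Sum>i\<in>ks \<alpha>. degree (sig B i ^ lk \<alpha> i))"
    unfolding mono_eval_def by (rule degree_prod_eq_sum_degree) (use nz in auto)
  also have "\<dots> = wt B \<alpha>" by (simp add: dp wt_def)
  finally show ?thesis using L by simp
qed

lemma cst_eq_0: "cst c = 0 \<longleftrightarrow> c = 0"
  by (metis cst_def lookup_single_eq single_zero)

lemma Phi_single:
  assumes "B \<ge> 1" "c \<noteq> 0"
  shows "degree (Phi B (sg \<alpha> c)) = wt B \<alpha> \<and> lead_coeff (Phi B (sg \<alpha> c)) = cst c"
proof -
  have eq: "Phi B (sg \<alpha> c) = [:cst c:] * mono_eval (sig B) \<alpha>"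
    unfolding Phi_def by (rule msubst_single[OF chom_pconst])
  have cc: "cst c \<noteq> 0" using assms by (simp add: cst_eq_0)
  have m0: "mono_eval (sig B) \<alpha> \<noteq> 0" using mono_sig_deg[OF assms(1), of \<alpha>] by auto
  have lc: "coeff (mono_eval (sig B) \<alpha>) (wt B \<alpha>) = 1"
    using mono_sig_deg[OF assms(1), of \<alpha>] by metis
  show ?thesis unfolding eq
    using mono_sig_deg[OF assms(1), of \<alpha>] cc m0 lc
    by (simp add: degree_mult_eq lead_coeff_mult)
qed

lemma Phi_lead:
  assumes "G \<noteq> 0" "\<forall>\<alpha>\<in>ks G. ks \<alpha> \<subseteq> {..<n}" "\<forall>\<alpha>\<in>ks G. \<forall>i. lk \<alpha> i < B"
  shows "\<exists>\<alpha>\<in>ks G. degree (Phi B G) = wt B \<alpha> \<and> lead_coeff (Phi B G) = cst (lk G \<alpha>)"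
proof -
  obtain \<alpha>0 where a0: "\<alpha>0 \<in> ks G" using assms(1) by (metis ex_in_conv keys_eq_empty)
  have B1: "B \<ge> 1" using assms(3) a0 by (metis less_one not_le not_less_zero)
  have fin: "finite (wt B ` ks G)" by simp
  have ne: "wt B ` ks G \<noteq> {}" using a0 by auto
  obtain \<alpha>m where am: "\<alpha>m \<in> ks G" "wt B \<alpha>m = Max (wt B ` ks G)"
    using Max_in[OF fin ne] by auto
  have lt: "\<forall>\<beta>\<in>ks G - {\<alpha>m}. wt B \<beta> < wt B \<alpha>m"
  proof
    fix \<beta> assume b: "\<beta> \<in> ks G - {\<alpha>m}"
    have "wt B \<beta> \<le> wt B \<alpha>m" using am b fin by simp
    moreover have "wt B \<beta> \<noteq> wt B \<alpha>m"
      using wt_inj[of \<beta> n \<alpha>m B] b am assms(2,3) by auto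
    ultimately show "wt B \<beta> < wt B \<alpha>m" by simp
  qed
  have PG: "Phi B G = (\<Sum>\<beta>\<in>ks G. Phi B (sg \<beta> (lk G \<beta>)))"
    by (subst pm_expand[of G]) (simp add: chom_sum[OF chom_Phi])
  have "degree (\<Sum>\<beta>\<in>ks G. Phi B (sg \<beta> (lk G \<beta>))) = degree (Phi B (sg \<alpha>m (lk G \<alpha>m))) \<and>
        lead_coeff (\<Sum>\<beta>\<in>ks G. Phi B (sg \<beta> (lk G \<beta>))) = lead_coeff (Phi B (sg \<alpha>m (lk G \<alpha>m)))"
    by (rule sum_strict_max_degree) (use am lt Phi_single[OF B1] in \<open>auto simp: in_keys_iff\<close>)
  note H = this[folded PG]
  have "lk G \<alpha>m \<noteq> 0" using am(1) by (simp add: in_keys_iff)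
  then have "degree (Phi B G) = wt B \<alpha>m \<and> lead_coeff (Phi B G) = cst (lk G \<alpha>m)"
    using H Phi_single[OF B1, of "lk G \<alpha>m" \<alpha>m] by metis
  then show ?thesis using am(1) by blast
qed

definition tau :: "nat \<Rightarrow> mpoly \<Rightarrow> mpoly" where
  "tau B = msubst cst (\<lambda>i. if i = 0 then Xv 0 else Xv i - Xv 0 ^ (B ^ i))"

definition Psi :: "nat \<Rightarrow> mpoly poly \<Rightarrow> mpoly" where
  "Psi B q = poly (map_poly (tau B) q) (Xv 0)"

lemma chom_tau: "chom (tau B)"
  unfolding tau_def by (rule chom_msubst[OF chom_cst])

lemma chom_map_poly: assumes "chom h" shows "chom (map_poly h)"
  unfolding chom_def[of "map_poly h"]
  using map_poly_add_hom[of h] map_poly_mult_hom[of h] chomD[OF assms] by (auto simp: map_poly_1')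

lemma chom_poly_eval: "chom (\<lambda>q. poly q x)"
  by (auto simp: chom_def)

lemma chom_Psi: "chom (Psi B)"
proof -
  have "Psi B = (\<lambda>q. poly q (Xv 0)) \<circ> map_poly (tau B)"
    by (auto simp: Psi_def fun_eq_iff)
  then show ?thesis using chom_comp[OF chom_map_poly[OF chom_tau] chom_poly_eval] by simp
qed

lemma tau_cst: "tau B (cst c) = cst c"
  unfolding tau_def by (rule msubst_cst[OF chom_cst])

lemma map_poly_const: "h 0 = 0 \<Longrightarrow> map_poly h [:a:] = [:h a:]"
  by (cases "a = 0") (simp_all add: map_poly_pCons)

lemma Psi_Phi: "Psi B (Phi B p) = p"
proof -
  have "(Psi B \<circ> Phi B) p = id p"
  proof (rule hom_eqI[of "Psi B \<circ> Phi B" id])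
    show "chom (Psi B \<circ> Phi B)" by (rule chom_comp[OF chom_Phi chom_Psi])
    show "chom (id :: mpoly \<Rightarrow> mpoly)" by (rule chom_id)
    fix c show "(Psi B \<circ> Phi B) (cst c) = id (cst c)"
      by (simp add: Phi_def msubst_cst[OF chom_pconst] Psi_def tau_cst map_poly_const chomD(1)[OF chom_tau])
  next
    fix i
    have t0: "tau B 0 = 0" "tau B 1 = 1" using chomD[OF chom_tau] by auto
    have ti: "tau B (Xv i) = (if i = 0 then Xv 0 else Xv i - Xv 0 ^ (B ^ i))"
      unfolding tau_def by (rule msubst_Xv[OF chom_cst])
    show "(Psi B \<circ> Phi B) (Xv i) = id (Xv i)"
      using ti by (simp add: Phi_def msubst_Xv[OF chom_pconst] Psi_def sig_def
          map_poly_add_hom[OF chomD(3)[OF chom_tau] t0(1)] map_poly_monom t0 poly_monom map_poly_const)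
  qed
  then show ?thesis by simp
qed

definition Mv :: "(nat \<Rightarrow> complex) \<Rightarrow> mpoly poly \<Rightarrow> complex poly" where
  "Mv a = map_poly (ev a)"

lemma chom_Mv: "chom (Mv a)"
  unfolding Mv_def by (rule chom_map_poly[OF chom_ev])

lemma ev_cst: "ev a (cst c) = c"
  unfolding ev_def by (rule msubst_cst[OF chom_id, simplified])

lemma rad_bound:
  fixes G f :: mpoly
  assumes G0: "G \<noteq> 0" and nv: "\<forall>\<alpha>\<in>ks G. ks \<alpha> \<subseteq> {..<n}" and eb: "\<forall>\<alpha>\<in>ks G. \<forall>i. lk \<alpha> i < B"
    and dv: "G dvd f ^ k"
  shows "\<exists>\<alpha>\<in>ks G. G dvd f ^ wt B \<alpha>"
proof -
  obtain \<alpha> where a: "\<alpha> \<in> ks G" "degree (Phi B G) = wt B \<alpha>" "lead_coeff (Phi B G) = cst (lk G \<alpha>)"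
    using Phi_lead[OF G0 nv eb] by blast
  define E where "E = degree (Phi B G)"
  define c where "c = lk G \<alpha>"
  have c0: "c \<noteq> 0" using a(1) by (simp add: c_def in_keys_iff)
  have PG0: "Phi B G \<noteq> 0" using G0 Psi_Phi[of B G] by (metis chomD(1)[OF chom_Psi])
  obtain q r where qr: "pseudo_divmod (Phi B f ^ E) (Phi B G) = (q, r)" by (cases "pseudo_divmod (Phi B f ^ E) (Phi B G)") auto
  define e where "e = Suc (degree (Phi B f ^ E)) - degree (Phi B G)"
  have eq: "smult (cst c ^ e) (Phi B f ^ E) = Phi B G * q + r"
    using pseudo_divmod(1)[OF PG0 qr] a(3) by (simp add: e_def c_def)
  have rdeg: "r = 0 \<or> degree r < E"
    using pseudo_divmod(2)[OF PG0 qr] by (simp add: E_def)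
  have Mr: "Mv a' r = 0" for a'
  proof -
    let ?H = "Mv a' (Phi B G)" and ?F = "Mv a' (Phi B f)"
    have coefH: "coeff ?H j = ev a' (coeff (Phi B G) j)" for j
      by (simp add: Mv_def coeff_map_poly chomD(1)[OF chom_ev])
    have "coeff ?H E = c" using coefH a(3) by (simp add: E_def ev_cst c_def)
    then have H0: "?H \<noteq> 0" and HE: "E \<le> degree ?H" using c0 by (auto intro: le_degree)
    have "degree ?H \<le> E"
      by (rule degree_le) (simp add: coefH E_def coeff_eq_0 chomD(1)[OF chom_ev])
    with HE have dH: "degree ?H = E" by simp
    have hc: "chom (Mv a' \<circ> Phi B)" by (rule chom_comp[OF chom_Phi chom_Mv])
    have "?H dvd ?F ^ k"
      using chom_dvd[OF hc dv] chom_power[OF hc] by simp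
    then have HF: "?H dvd ?F ^ E" using univ_rad_bound[OF H0] dH by metis
    have "Mv a' (smult (cst c ^ e) (Phi B f ^ E)) = Mv a' (Phi B G * q + r)" using eq by simp
    then have "smult (c ^ e) (?F ^ E) = ?H * Mv a' q + Mv a' r"
      using chomD[OF chom_Mv] chom_power[OF chom_Mv] chom_power[OF chom_ev]
      by (simp add: Mv_def map_poly_smult chomD[OF chom_ev] ev_cst)
    then have "Mv a' r = smult (c ^ e) (?F ^ E) - ?H * Mv a' q" by (simp add: algebra_simps)
    moreover have "?H dvd smult (c ^ e) (?F ^ E)" using HF by (simp add: dvd_smult)
    ultimately have Hr: "?H dvd Mv a' r" by simp
    show "Mv a' r = 0"
    proof (rule ccontr)
      assume M0: "Mv a' r \<noteq> 0"
      then have "E \<le> degree (Mv a' r)" using dvd_imp_degree_le[OF Hr M0] dH by simp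
      moreover have "degree (Mv a' r) \<le> degree r"
        by (rule degree_le) (simp add: Mv_def coeff_map_poly chomD(1)[OF chom_ev] coeff_eq_0)
      moreover have "r \<noteq> 0" using M0 by (auto simp: Mv_def)
      ultimately show False using rdeg by simp
    qed
  qed
  have "r = 0"
  proof (rule poly_eqI)
    fix j
    have "ev a' (coeff r j) = 0" for a'
      using arg_cong[OF Mr[of a'], of "\<lambda>p. coeff p j"] by (simp add: Mv_def coeff_map_poly chomD(1)[OF chom_ev])
    then show "coeff r j = coeff 0 j" using identity_thm by simp
  qed
  then have eq2: "smult (cst c ^ e) (Phi B f ^ E) = Phi B G * q" using eq by simp
  have "Psi B (smult (cst c ^ e) (Phi B f ^ E)) = tau B (cst c ^ e) * Psi B (Phi B f ^ E)"
    unfolding Psi_def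
    by (subst map_poly_smult) (auto simp: chomD[OF chom_tau])
  also have "\<dots> = cst (c ^ e) * f ^ E"
    using chom_power[OF chom_Phi, of B f E] chom_power[OF chom_tau, of B] chom_power[OF chom_cst]
      Psi_Phi[of B "f ^ E"] tau_cst by simp
  finally have "Psi B (smult (cst c ^ e) (Phi B f ^ E)) = cst (c ^ e) * f ^ E" .
  then have "cst (c ^ e) * f ^ E = G * Psi B q"
    using eq2 chomD(4)[OF chom_Psi] Psi_Phi[of B G] by simp
  then have "cst (inverse (c ^ e)) * (cst (c ^ e) * f ^ E) = G * (cst (inverse (c ^ e)) * Psi B q)"
    by (simp add: mult_ac)
  moreover have "cst (inverse (c ^ e)) * cst (c ^ e) = 1"
    using c0 by (simp add: cst_def mult_single)
  ultimately have "f ^ E = G * (cst (inverse (c ^ e)) * Psi B q)"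
    by (metis mult.assoc mult_1)
  then show ?thesis using a by (auto simp: E_def dvd_def)
qed


definition wtw :: "(nat \<Rightarrow> nat) \<Rightarrow> (nat \<Rightarrow>\<^sub>0 nat) \<Rightarrow> nat" where
  "wtw \<omega> \<alpha> = (\<Sum>i\<in>ks \<alpha>. lk \<alpha> i * \<omega> i)"

definition Th :: "(nat \<Rightarrow> nat) \<Rightarrow> mpoly \<Rightarrow> mpoly poly" where
  "Th \<omega> = msubst (\<lambda>c. [:cst c:]) (\<lambda>i. monom (Xv i) (\<omega> i))"

lemma chom_Th: "chom (Th \<omega>)"
  unfolding Th_def by (rule chom_msubst[OF chom_pconst])

lemma prod_monom: "(\<Prod>i\<in>A. monom (f i) (g i)) = monom (\<Prod>i\<in>A. f i) (\<Sum>i\<in>A. g i)"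
  by (induction A rule: infinite_finite_induct) (auto simp: mult_monom)

lemma Th_single: "Th \<omega> (sg \<alpha> c) = monom (sg \<alpha> c) (wtw \<omega> \<alpha>)"
proof -
  have "Th \<omega> (sg \<alpha> c) = [:cst c:] * mono_eval (\<lambda>i. monom (Xv i) (\<omega> i)) \<alpha>"
    unfolding Th_def by (rule msubst_single[OF chom_pconst])
  also have "mono_eval (\<lambda>i. monom (Xv i) (\<omega> i)) \<alpha> = monom (mono_eval Xv \<alpha>) (wtw \<omega> \<alpha>)"
    by (simp add: mono_eval_def monom_power prod_monom wtw_def mult.commute)
  also have "[:cst c:] * monom (mono_eval Xv \<alpha>) (wtw \<omega> \<alpha>) = monom (sg \<alpha> c) (wtw \<omega> \<alpha>)"
    by (simp add: mono_eval_Xv cst_def mult_single smult_monom)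
  finally show ?thesis .
qed

lemma Th_expand: "Th \<omega> p = (\<Sum>\<alpha>\<in>ks p. monom (sg \<alpha> (lk p \<alpha>)) (wtw \<omega> \<alpha>))"
  by (subst pm_expand[of p]) (simp add: chom_sum[OF chom_Th] Th_single)

lemma Th_key_le:
  assumes "\<alpha> \<in> ks p"
  shows "wtw \<omega> \<alpha> \<le> degree (Th \<omega> p) \<and> Th \<omega> p \<noteq> 0"
proof -
  have "lk (coeff (Th \<omega> p) (wtw \<omega> \<alpha>)) \<alpha> = (\<Sum>\<beta>\<in>ks p. if wtw \<omega> \<beta> = wtw \<omega> \<alpha> \<and> \<beta> = \<alpha> then lk p \<beta> else 0)"
    by (simp add: Th_expand coeff_sum lookup_sum lookup_single when_def)
       (rule sum.cong, auto simp: lookup_single when_def)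
  also have "\<dots> = (\<Sum>\<beta>\<in>ks p. if \<beta> = \<alpha> then lk p \<beta> else 0)" by (rule sum.cong) auto
  also have "\<dots> = lk p \<alpha>" using assms by (simp add: sum.delta)
  finally have "coeff (Th \<omega> p) (wtw \<omega> \<alpha>) \<noteq> 0" using assms by (auto simp: in_keys_iff)
  then show ?thesis by (auto intro: le_degree)
qed

lemma Th_deg_le:
  assumes "\<forall>\<alpha>\<in>ks p. wtw \<omega> \<alpha> \<le> N"
  shows "degree (Th \<omega> p) \<le> N"
  unfolding Th_expand
  by (rule degree_sum_le) (use assms in \<open>auto intro: order.trans[OF degree_monom_le]\<close>)

lemma quot_keys:
  fixes F G Q :: mpoly
  assumes "F = G * Q" "G \<noteq> 0" "\<forall>\<alpha>\<in>ks F. wtw \<omega> \<alpha> \<le> N"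
  shows "\<forall>\<alpha>\<in>ks Q. wtw \<omega> \<alpha> \<le> N"
proof
  fix \<alpha> assume a: "\<alpha> \<in> ks Q"
  obtain \<beta> where b: "\<beta> \<in> ks G" using assms(2) by (metis ex_in_conv keys_eq_empty)
  have TQ: "wtw \<omega> \<alpha> \<le> degree (Th \<omega> Q)" "Th \<omega> Q \<noteq> 0" using Th_key_le[OF a] by auto
  have TG: "Th \<omega> G \<noteq> 0" using Th_key_le[OF b] by auto
  have "Th \<omega> F = Th \<omega> G * Th \<omega> Q" using assms(1) chomD(4)[OF chom_Th] by simp
  then have "degree (Th \<omega> F) = degree (Th \<omega> G) + degree (Th \<omega> Q)"
    using TQ TG by (simp add: degree_mult_eq)
  moreover have "degree (Th \<omega> F) \<le> N" by (rule Th_deg_le[OF assms(3)])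
  ultimately show "wtw \<omega> \<alpha> \<le> N" using TQ by simp
qed

lemma wtw_vars: "wtw (\<lambda>i. if i < n then 0 else 1) \<alpha> = 0 \<longleftrightarrow> ks \<alpha> \<subseteq> {..<n}"
proof -
  have "wtw (\<lambda>i. if i < n then 0 else 1) \<alpha> = 0 \<longleftrightarrow> (\<forall>i\<in>ks \<alpha>. lk \<alpha> i * (if i < n then 0 else 1) = 0)"
    unfolding wtw_def by (rule sum_eq_0_iff) simp
  also have "\<dots> \<longleftrightarrow> (\<forall>i\<in>ks \<alpha>. i < n)"
    by (intro ball_cong refl) (simp add: in_keys_iff)
  also have "\<dots> \<longleftrightarrow> ks \<alpha> \<subseteq> {..<n}" by auto
  finally show ?thesis .
qed

lemma lk_le_wtw: "lk \<alpha> i \<le> wtw (\<lambda>i. 1) \<alpha>"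
proof (cases "i \<in> ks \<alpha>")
  case True
  have "(\<lambda>j. lk \<alpha> j * 1) i \<le> (\<Sum>j\<in>ks \<alpha>. lk \<alpha> j * 1)"
    by (rule member_le_sum) (use True in auto)
  then show ?thesis unfolding wtw_def by simp
next
  case False then show ?thesis by (simp add: in_keys_iff)
qed

definition Vset :: "nat \<Rightarrow> nat \<Rightarrow> (nat \<Rightarrow>\<^sub>0 nat) set" where
  "Vset n N = {\<alpha>. ks \<alpha> \<subseteq> {..<n} \<and> wtw (\<lambda>i. 1) \<alpha> \<le> N}"

lemma finite_Vset: "finite (Vset n N)"
proof -
  let ?S = "{f. \<forall>x. (x \<in> {..<n} \<longrightarrow> f x \<in> {0..N}) \<and> (x \<notin> {..<n} \<longrightarrow> f x = (0::nat))}"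
  have fS: "finite ?S" by (rule finite_set_of_finite_funs) auto
  have "Vset n N \<subseteq> lk -` ?S"
  proof
    fix \<alpha> assume "\<alpha> \<in> Vset n N"
    then have k: "ks \<alpha> \<subseteq> {..<n}" and w: "wtw (\<lambda>i. 1) \<alpha> \<le> N" by (auto simp: Vset_def)
    have le: "lk \<alpha> x \<le> N" for x using lk_le_wtw[of \<alpha> x] w by linarith
    have z: "lk \<alpha> x = 0" if "x \<notin> {..<n}" for x
      using k that by (metis in_keys_iff subsetD)
    show "\<alpha> \<in> lk -` ?S" using le z by simp
  qed
  moreover have "finite (lk -` ?S)"
  proof (rule finite_vimageI[OF fS], rule injI)
    fix x y :: "nat \<Rightarrow>\<^sub>0 nat" assume "lk x = lk y"
    then show "x = y" by (intro poly_mapping_eqI) simp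
  qed
  ultimately show ?thesis by (rule finite_subset)
qed

lemma quot_in_Vset:
  fixes F G Q :: mpoly
  assumes "F = G * Q" "G \<noteq> 0" "\<forall>\<alpha>\<in>ks F. \<alpha> \<in> Vset n N"
  shows "ks Q \<subseteq> Vset n N"
proof -
  have "\<forall>\<alpha>\<in>ks Q. wtw (\<lambda>i. 1) \<alpha> \<le> N"
    by (rule quot_keys[OF assms(1,2)]) (use assms(3) in \<open>auto simp: Vset_def\<close>)
  moreover have "\<forall>\<alpha>\<in>ks Q. wtw (\<lambda>i. if i < n then 0 else 1) \<alpha> \<le> 0"
    by (rule quot_keys[OF assms(1,2)]) (use assms(3) wtw_vars in \<open>auto simp: Vset_def\<close>)
  ultimately show ?thesis using wtw_vars by (auto simp: Vset_def)
qed


definition pn :: "mpoly \<Rightarrow> real" where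
  "pn p = (\<Sum>\<alpha>\<in>ks p. cmod (lk p \<alpha>))"

lemma pn_superset: "finite A \<Longrightarrow> ks p \<subseteq> A \<Longrightarrow> pn p = (\<Sum>\<alpha>\<in>A. cmod (lk p \<alpha>))"
  unfolding pn_def by (rule sum.mono_neutral_left) (auto simp: in_keys_iff)

lemma pn_ge0: "pn p \<ge> 0"
  unfolding pn_def by (simp add: sum_nonneg)

lemma lk_le_pn: "cmod (lk p \<alpha>) \<le> pn p"
proof (cases "\<alpha> \<in> ks p")
  case True
  then show ?thesis unfolding pn_def by (rule member_le_sum) auto
next
  case False then show ?thesis by (simp add: in_keys_iff pn_ge0)
qed

lemma pn_add: "pn (p + q) \<le> pn p + pn q"
proof -
  let ?A = "ks p \<union> ks q"
  have "pn (p + q) = (\<Sum>\<alpha>\<in>?A. cmod (lk p \<alpha> + lk q \<alpha>))"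
    using pn_superset[of ?A "p + q"] keys_add[of p q] by (simp add: lookup_add)
  also have "\<dots> \<le> (\<Sum>\<alpha>\<in>?A. cmod (lk p \<alpha>) + cmod (lk q \<alpha>))"
    by (rule sum_mono) (rule norm_triangle_ineq)
  also have "\<dots> = pn p + pn q"
    using pn_superset[of ?A p] pn_superset[of ?A q] by (simp add: sum.distrib)
  finally show ?thesis .
qed

lemma pn_uminus: "pn (- p) = pn p"
proof -
  let ?A = "ks p \<union> ks (- p)"
  have "pn (- p) = (\<Sum>\<alpha>\<in>?A. cmod (lk (- p) \<alpha>))" by (rule pn_superset) auto
  also have "\<dots> = (\<Sum>\<alpha>\<in>?A. cmod (lk p \<alpha>))" by simp
  also have "\<dots> = pn p" by (rule pn_superset[symmetric]) auto
  finally show ?thesis .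
qed

lemma pn_diff: "pn (p - q) \<le> pn p + pn q"
  using pn_add[of p "- q"] pn_uminus[of q] by simp

lemma pn_single: "pn (sg \<alpha> c) = cmod c"
  by (cases "c = 0") (simp_all add: pn_def)

lemma pn_sum: "pn (sum f A) \<le> (\<Sum>x\<in>A. pn (f x))"
proof (induction A rule: infinite_finite_induct)
  case (insert x F)
  then show ?case using pn_add[of "f x" "sum f F"] by simp
qed (simp_all add: pn_def)

lemma pn_mult: "pn (p * q) \<le> pn p * pn q"
proof -
  have "pn (p * q) = pn (\<Sum>a\<in>ks p. \<Sum>b\<in>ks q. sg (a+b) (lk p a * lk q b))"
    by (subst mult_expand_superset[of "ks p" p "ks q" q]) auto
  also have "\<dots> \<le> (\<Sum>a\<in>ks p. pn (\<Sum>b\<in>ks q. sg (a+b) (lk p a * lk q b)))" by (rule pn_sum)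
  also have "\<dots> \<le> (\<Sum>a\<in>ks p. \<Sum>b\<in>ks q. pn (sg (a+b) (lk p a * lk q b)))"
    by (rule sum_mono) (rule pn_sum)
  also have "\<dots> = (\<Sum>a\<in>ks p. \<Sum>b\<in>ks q. cmod (lk p a) * cmod (lk q b))"
    by (simp add: pn_single norm_mult)
  also have "\<dots> = pn p * pn q"
    by (simp add: pn_def sum_distrib_left sum_distrib_right sum.swap[of _ "ks q" "ks p"])
  finally show ?thesis .
qed

lemma pn_zero [simp]: "pn 0 = 0"
  by (simp add: pn_def)

lemma lookup_top:
  fixes G q :: mpoly
  assumes "\<beta> = Max (ks G)" "G \<noteq> 0" "\<forall>b\<in>ks q. b < \<mu>"
  shows "lk (G * q) (\<beta> + \<mu>) = 0"
proof -
  have "lk (G * q) (\<beta> + \<mu>) = (\<Sum>a\<in>ks G. \<Sum>b\<in>ks q. if a + b = \<beta> + \<mu> then lk G a * lk q b else 0)"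
    by (rule lookup_mult_superset) auto
  also have "\<dots> = 0"
  proof (intro sum.neutral ballI)
    fix a b assume a: "a \<in> ks G" and b: "b \<in> ks q"
    have "a \<le> \<beta>" using a assms(1) by simp
    moreover have "b < \<mu>" using b assms(3) by simp
    ultimately have "a + b < \<beta> + \<mu>" by (rule add_le_less_mono)
    then show "(if a + b = \<beta> + \<mu> then lk G a * lk q b else 0) = 0" by simp
  qed
  finally show ?thesis .
qed

lemma lookup_top_single:
  fixes G :: mpoly
  assumes "\<beta> = Max (ks G)" "G \<noteq> 0"
  shows "lk (G * sg \<mu> t) (\<beta> + \<mu>) = lk G \<beta> * t"
proof -
  have "lk (G * sg \<mu> t) (\<beta> + \<mu>) = (\<Sum>a\<in>ks G. \<Sum>b\<in>{\<mu>}. if a + b = \<beta> + \<mu> then lk G a * lk (sg \<mu> t) b else 0)"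
    by (rule lookup_mult_superset) auto
  also have "\<dots> = (\<Sum>a\<in>ks G. if a = \<beta> then lk G a * t else 0)"
    by (rule sum.cong) auto
  also have "\<dots> = lk G \<beta> * t"
    using assms by (simp add: sum.delta)
  finally show ?thesis .
qed

lemma lower_bound:
  fixes G :: mpoly
  assumes G0: "G \<noteq> 0" and fV: "finite V"
  shows "\<exists>C>0. \<forall>q. ks q \<subseteq> V \<longrightarrow> pn q \<le> C * pn (G * q)"
  using fV
proof (induction V rule: finite_remove_induct)
  case empty
  show ?case by (rule exI[of _ 1]) (auto simp: pn_def)
next
  case (remove A)
  define \<mu> where "\<mu> = Max A"
  have mu: "\<mu> \<in> A" using remove.hyps(1,2) by (simp add: \<mu>_def)
  obtain C' where C': "C' > 0" "\<forall>q. ks q \<subseteq> A - {\<mu>} \<longrightarrow> pn q \<le> C' * pn (G * q)"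
    using remove.IH[OF mu] by blast
  define \<beta> where "\<beta> = Max (ks G)"
  have bG: "\<beta> \<in> ks G" using G0 by (simp add: \<beta>_def)
  define a where "a = lk G \<beta>"
  have a0: "cmod a > 0" using bG by (simp add: a_def in_keys_iff)
  define C where "C = C' * (1 + pn G / cmod a) + 1 / cmod a"
  have "pn G / cmod a \<ge> 0" using a0 pn_ge0[of G] by simp
  then have "C' * (1 + pn G / cmod a) > 0" using C'(1) by simp
  moreover have "1 / cmod a > 0" using a0 by simp
  ultimately have Cpos: "C > 0" unfolding C_def by (rule add_pos_pos)
  show ?case
  proof (intro exI[of _ C] conjI allI impI Cpos)
    fix q :: mpoly assume kq: "ks q \<subseteq> A"
    define t where "t = lk q \<mu>"
    define q' where "q' = q - sg \<mu> t"
    have kq': "ks q' \<subseteq> A - {\<mu>}"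
    proof
      fix k assume k: "k \<in> ks q'"
      then have "lk q k - (if k = \<mu> then t else 0) \<noteq> 0"
        by (auto simp: q'_def in_keys_iff lookup_minus lookup_single when_def split: if_splits)
      then show "k \<in> A - {\<mu>}" using kq by (auto simp: t_def in_keys_iff split: if_splits)
    qed
    have lt: "\<forall>b\<in>ks q'. b < \<mu>"
    proof
      fix b assume "b \<in> ks q'"
      then have "b \<in> A" "b \<noteq> \<mu>" using kq' by auto
      then show "b < \<mu>" using remove.hyps(1) by (simp add: \<mu>_def order.not_eq_order_implies_strict)
    qed
    have qeq: "q = q' + sg \<mu> t" by (simp add: q'_def)
    have "lk (G * q) (\<beta> + \<mu>) = lk (G * q') (\<beta> + \<mu>) + lk (G * sg \<mu> t) (\<beta> + \<mu>)"
      by (simp add: qeq distrib_left lookup_add)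
    also have "\<dots> = a * t"
      using lookup_top[OF \<beta>_def G0 lt] lookup_top_single[OF \<beta>_def G0] by (simp add: a_def)
    finally have "cmod a * cmod t \<le> pn (G * q)" using lk_le_pn[of "G * q" "\<beta> + \<mu>"] by (simp add: norm_mult)
    then have tb: "cmod t \<le> pn (G * q) / cmod a" using a0 by (simp add: field_simps)
    have "pn (G * q') = pn (G * q - G * sg \<mu> t)" by (simp add: q'_def right_diff_distrib)
    also have "\<dots> \<le> pn (G * q) + pn (G * sg \<mu> t)" by (rule pn_diff)
    also have "pn (G * sg \<mu> t) \<le> pn G * cmod t" using pn_mult[of G "sg \<mu> t"] by (simp add: pn_single)
    finally have gq': "pn (G * q') \<le> pn (G * q) + pn G * cmod t" by simp
    have "pn q \<le> pn q' + cmod t" using pn_add[of q' "sg \<mu> t"] by (simp add: qeq pn_single)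
    also have "pn q' \<le> C' * pn (G * q')" using C'(2) kq' by blast
    also have "\<dots> \<le> C' * (pn (G * q) + pn G * cmod t)" using gq' C'(1) by (simp add: mult_left_mono)
    also have "pn G * cmod t \<le> pn G * (pn (G * q) / cmod a)" using tb pn_ge0[of G] by (rule mult_left_mono)
    finally have "pn q \<le> C' * (pn (G * q) + pn G * (pn (G * q) / cmod a)) + pn (G * q) / cmod a"
      using tb C'(1) by (smt (verit, best) mult_left_mono)
    also have "\<dots> = C * pn (G * q)" by (simp add: C_def field_simps)
    finally show "pn q \<le> C * pn (G * q)" .
  qed
qed


lemma continuous_map_cmult:
  fixes f g :: "'a \<Rightarrow> complex"
  shows "continuous_map X euclidean f \<Longrightarrow> continuous_map X euclidean g \<Longrightarrow> continuous_map X euclidean (\<lambda>x. f x * g x)"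
  by (simp add: continuous_map_atin tendsto_mult)

lemma cont_coeff_mult:
  fixes A B :: "'s \<Rightarrow> mpoly"
  assumes "finite KA" "\<forall>s\<in>topspace T. ks (A s) \<subseteq> KA" "finite KB" "\<forall>s\<in>topspace T. ks (B s) \<subseteq> KB"
    "\<forall>\<alpha>. continuous_map T euclidean (\<lambda>s. lk (A s) \<alpha>)" "\<forall>\<alpha>. continuous_map T euclidean (\<lambda>s. lk (B s) \<alpha>)"
  shows "continuous_map T euclidean (\<lambda>s. lk (A s * B s) \<gamma>)"
proof (rule continuous_map_eq)
  show "continuous_map T euclidean (\<lambda>s. \<Sum>a\<in>KA. \<Sum>b\<in>KB. if a + b = \<gamma> then lk (A s) a * lk (B s) b else 0)"
  proof (intro continuous_map_sum assms(1,3))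
    fix a b
    show "continuous_map T euclidean (\<lambda>s. if a + b = \<gamma> then lk (A s) a * lk (B s) b else 0)"
      by (cases "a + b = \<gamma>") (simp_all add: continuous_map_cmult assms(5,6))
  qed
  fix s assume "s \<in> topspace T"
  then show "(\<Sum>a\<in>KA. \<Sum>b\<in>KB. if a + b = \<gamma> then lk (A s) a * lk (B s) b else 0) = lk (A s * B s) \<gamma>"
    using assms by (intro lookup_mult_superset[symmetric]) auto
qed

lemma keys_mult_sub:
  fixes p q :: mpoly
  assumes "ks p \<subseteq> KA" "ks q \<subseteq> KB"
  shows "ks (p * q) \<subseteq> (\<lambda>(a, b). a + b) ` (KA \<times> KB)"
  using keys_mult[of p q] assms by force

lemma cont_power:
  fixes f :: "'s \<Rightarrow> mpoly"
  assumes "finite K" "\<forall>s\<in>topspace T. ks (f s) \<subseteq> K" "\<forall>\<alpha>. continuous_map T euclidean (\<lambda>s. lk (f s) \<alpha>)"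
  shows "\<exists>K'. finite K' \<and> (\<forall>s\<in>topspace T. ks (f s ^ m) \<subseteq> K') \<and> (\<forall>\<alpha>. continuous_map T euclidean (\<lambda>s. lk (f s ^ m) \<alpha>))"
proof (induction m)
  case 0
  show ?case by (rule exI[of _ "{0}"]) (auto simp: lookup_one)
next
  case (Suc m)
  then obtain K' where K': "finite K'" "\<forall>s\<in>topspace T. ks (f s ^ m) \<subseteq> K'" "\<forall>\<alpha>. continuous_map T euclidean (\<lambda>s. lk (f s ^ m) \<alpha>)"
    by blast
  let ?K = "(\<lambda>(a, b). a + b) ` (K \<times> K')"
  have "finite ?K" using assms(1) K'(1) by simp
  moreover have "\<forall>s\<in>topspace T. ks (f s ^ Suc m) \<subseteq> ?K"
    using keys_mult_sub assms(2) K'(2) by simp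
  moreover have "\<forall>\<alpha>. continuous_map T euclidean (\<lambda>s. lk (f s ^ Suc m) \<alpha>)"
    using cont_coeff_mult[OF assms(1,2) K'(1,2) assms(3) K'(3)] by simp
  ultimately show ?case by blast
qed

lemma keys_diff_sub: "ks ((p::mpoly) - q) \<subseteq> ks p \<union> ks q"
  by (auto simp: in_keys_iff lookup_minus)

lemma pn_diff_le_sum:
  fixes p q :: mpoly
  assumes "finite K" "ks p \<subseteq> K" "ks q \<subseteq> K"
  shows "pn (p - q) \<le> (\<Sum>\<alpha>\<in>K. cmod (lk p \<alpha> - lk q \<alpha>))"
proof -
  have "ks (p - q) \<subseteq> K" using keys_diff_sub[of p q] assms by auto
  then show ?thesis using pn_superset[OF assms(1)] by (simp add: lookup_minus)
qed

lemma quot_cont: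
  fixes g F Q :: "'s \<Rightarrow> mpoly"
  assumes FgQ: "\<forall>s\<in>topspace T. F s = g s * Q s"
    and g0: "\<forall>s\<in>topspace T. g s \<noteq> 0"
    and fV: "finite V" and QV: "\<forall>s\<in>topspace T. ks (Q s) \<subseteq> V"
    and fK: "finite K" and gK: "\<forall>s\<in>topspace T. ks (g s) \<subseteq> K"
    and fKF: "finite KF" and FK: "\<forall>s\<in>topspace T. ks (F s) \<subseteq> KF"
    and gc: "\<forall>\<alpha>. continuous_map T euclidean (\<lambda>s. lk (g s) \<alpha>)"
    and Fc: "\<forall>\<alpha>. continuous_map T euclidean (\<lambda>s. lk (F s) \<alpha>)"
  shows "continuous_map T euclidean (\<lambda>s. lk (Q s) \<alpha>)"
  unfolding continuous_map_atin limitin_canonical_iff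
proof
  fix s0 assume s0: "s0 \<in> topspace T"
  define G0 where "G0 = g s0"
  define Q0 where "Q0 = Q s0"
  define F0 where "F0 = F s0"
  have G00: "G0 \<noteq> 0" using g0 s0 by (simp add: G0_def)
  obtain C where C: "C > 0" "\<forall>q. ks q \<subseteq> V \<longrightarrow> pn q \<le> C * pn (G0 * q)"
    using lower_bound[OF G00 fV] by blast
  define \<phi> where "\<phi> s = (\<Sum>\<beta>\<in>K. cmod (lk (g s) \<beta> - lk G0 \<beta>))" for s
  define \<psi> where "\<psi> s = (\<Sum>\<beta>\<in>KF. cmod (lk (F s) \<beta> - lk F0 \<beta>))" for s
  have \<phi>c: "continuous_map T euclidean \<phi>"
    unfolding \<phi>_def by (intro continuous_map_sum fK continuous_map_norm continuous_map_diff) (auto intro: gc[rule_format] continuous_map_canonical_const)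
  have \<psi>c: "continuous_map T euclidean \<psi>"
    unfolding \<psi>_def by (intro continuous_map_sum fKF continuous_map_norm continuous_map_diff) (auto intro: Fc[rule_format] continuous_map_canonical_const)
  have \<phi>0: "\<phi> s0 = 0" by (simp add: \<phi>_def G0_def)
  have \<psi>0: "\<psi> s0 = 0" by (simp add: \<psi>_def F0_def)
  show "((\<lambda>s. lk (Q s) \<alpha>) \<longlongrightarrow> lk (Q s0) \<alpha>) (atin T s0)"
  proof (rule tendstoI)
    fix \<epsilon> :: real assume \<epsilon>: "\<epsilon> > 0"
    define h where "h s = max (C * \<phi> s * 4) ((4 * C / \<epsilon>) * (\<psi> s + \<phi> s * pn Q0))" for s
    have hc: "continuous_map T euclidean h"
      unfolding h_def by (intro continuous_map_real_max continuous_map_real_mult_left continuous_map_real_mult_right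
          continuous_map_add \<phi>c \<psi>c)
    have h0: "h s0 = 0" by (simp add: h_def \<phi>0 \<psi>0)
    define W where "W = {s \<in> topspace T. h s \<in> {..<1}}"
    have W: "openin T W" unfolding W_def by (rule openin_continuous_map_preimage[OF hc]) simp
    have sW: "s0 \<in> W" using s0 h0 by (simp add: W_def)
    show "\<forall>\<^sub>F s in atin T s0. dist (lk (Q s) \<alpha>) (lk (Q s0) \<alpha>) < \<epsilon>"
      unfolding eventually_atin
    proof (intro disjI2 exI[of _ W] conjI W sW ballI)
      fix s assume "s \<in> W - {s0}"
      then have s: "s \<in> topspace T" and hs: "h s < 1" by (auto simp: W_def)
      have \<phi>s: "C * \<phi> s < 1/2" and \<psi>s: "2 * C * (\<psi> s + \<phi> s * pn Q0) < \<epsilon> / 2"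
        using hs \<epsilon> by (auto simp: h_def field_simps)
      have pg: "pn (G0 - g s) \<le> \<phi> s"
      proof -
        have "pn (G0 - g s) = pn (- (g s - G0))" by simp
        also have "\<dots> = pn (g s - G0)" by (rule pn_uminus)
        also have "\<dots> \<le> \<phi> s" unfolding \<phi>_def G0_def
          by (rule pn_diff_le_sum[OF fK]) (use gK s s0 in auto)
        finally show ?thesis .
      qed
      have pF: "pn (F s - F0) \<le> \<psi> s" unfolding \<psi>_def F0_def
        by (rule pn_diff_le_sum[OF fKF]) (use FK s s0 in auto)
      define D where "D = Q s - Q0"
      have kD: "ks D \<subseteq> V" using keys_diff_sub[of "Q s" Q0] QV s s0 by (auto simp: D_def Q0_def)
      have "pn D \<le> C * pn (G0 * D)" using C(2) kD by blast
      also have "G0 * D = g s * D + (G0 - g s) * D" by (simp add: algebra_simps)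
      also have "pn (g s * D + (G0 - g s) * D) \<le> pn (g s * D) + pn (G0 - g s) * pn D"
        using pn_add[of "g s * D" "(G0 - g s) * D"] pn_mult[of "G0 - g s" D] by simp
      finally have "pn D \<le> C * (pn (g s * D) + pn (G0 - g s) * pn D)" using C(1) by (simp add: mult_left_mono)
      also have "\<dots> \<le> C * (pn (g s * D) + \<phi> s * pn D)"
        using pg pn_ge0[of D] C(1) by (intro mult_left_mono add_left_mono mult_right_mono) auto
      finally have "pn D \<le> C * pn (g s * D) + (C * \<phi> s) * pn D" by (simp add: algebra_simps)
      moreover have "(C * \<phi> s) * pn D \<le> 1/2 * pn D" using \<phi>s pn_ge0[of D] by (intro mult_right_mono) auto
      ultimately have pD: "pn D \<le> 2 * C * pn (g s * D)" by simp
      have "g s * D = (F s - F0) + (G0 - g s) * Q0"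
        using FgQ s s0 by (simp add: D_def Q0_def F0_def G0_def algebra_simps)
      then have "pn (g s * D) \<le> pn (F s - F0) + pn (G0 - g s) * pn Q0"
        using pn_add[of "F s - F0" "(G0 - g s) * Q0"] pn_mult[of "G0 - g s" Q0] by simp
      also have "\<dots> \<le> \<psi> s + \<phi> s * pn Q0"
        using pF pg pn_ge0[of Q0] by (intro add_mono mult_right_mono) auto
      finally have "pn D \<le> 2 * C * (\<psi> s + \<phi> s * pn Q0)" using pD C(1) by (smt (verit) mult_left_mono)
      then have "pn D < \<epsilon>" using \<psi>s \<epsilon> by simp
      moreover have "cmod (lk D \<alpha>) \<le> pn D" by (rule lk_le_pn)
      ultimately show "dist (lk (Q s) \<alpha>) (lk (Q s0) \<alpha>) < \<epsilon>"
        by (simp add: dist_norm D_def Q0_def lookup_minus)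
    qed
  qed
qed



lemma vars_power:
  fixes p :: mpoly
  assumes "\<forall>\<alpha>\<in>ks p. ks \<alpha> \<subseteq> {..<n}"
  shows "\<forall>\<alpha>\<in>ks (p ^ m). ks \<alpha> \<subseteq> {..<n}"
proof (induction m)
  case 0
  then show ?case by (auto simp: lookup_one in_keys_iff when_def split: if_splits)
next
  case (Suc m)
  show ?case
  proof
    fix \<gamma> assume "\<gamma> \<in> ks (p ^ Suc m)"
    then obtain a b where ab: "\<gamma> = a + b" "a \<in> ks p" "b \<in> ks (p ^ m)"
      using keys_mult[of p "p ^ m"] by auto
    then show "ks \<gamma> \<subseteq> {..<n}" using keys_add[of a b] assms Suc.IH by blast
  qed
qed

lemma in_vars_iff: "in_vars n p \<longleftrightarrow> (\<forall>\<alpha>\<in>ks p. ks \<alpha> \<subseteq> {..<n})"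
  by (auto simp: in_vars_def)

theorem mainTheorem3:
  fixes X :: "'s topology" and n :: nat and g :: "'s \<Rightarrow> mpoly"
  assumes "compact_space X"
    and "g \<in> cpolys n X (topspace X)"
    and "\<forall>s\<in>topspace X. g s \<noteq> 0"
  shows "\<forall>U. openin X U \<longrightarrow> FRad n X g U = sqrt_ideal n X g U"
proof (intro allI impI)
  fix U assume oU: "openin X U"
  have UX: "U \<subseteq> topspace X" using oU by (rule openin_subset)
  define T where "T = subtopology X U"
  have tT: "topspace T = U" using UX by (auto simp: T_def)
  define Kg where "Kg = (\<Union>s\<in>topspace X. ks (g s))"
  have fKg: "finite Kg" using assms(2) by (simp add: cpolys_def Kg_def)
  have gvars: "\<forall>s\<in>topspace X. \<forall>\<alpha>\<in>ks (g s). ks \<alpha> \<subseteq> {..<n}"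
    using assms(2) by (simp add: cpolys_def in_vars_iff)
  have gcX: "\<forall>\<alpha>. continuous_map X euclidean (\<lambda>s. lk (g s) \<alpha>)"
    using assms(2) by (simp add: cpolys_def subtopology_topspace)
  have gc: "\<forall>\<alpha>. continuous_map T euclidean (\<lambda>s. lk (g s) \<alpha>)"
    using gcX by (simp add: T_def continuous_map_from_subtopology)
  have restrU: "restr U g s = g s" if "s \<in> U" for s using that by (simp add: restr_def)
  show "FRad n X g U = sqrt_ideal n X g U"
  proof
    show "sqrt_ideal n X g U \<subseteq> FRad n X g U"
    proof
      fix f assume "f \<in> sqrt_ideal n X g U"
      then obtain m where f: "f \<in> cpolys n X U" "cpow U f m \<in> gen_ideal n X g U"
        by (auto simp: sqrt_ideal_def)
      have "f s \<in> poly_radical (ideal_at n X g U s)" if "s \<in> U" for s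
      proof -
        have "f s ^ m = cpow U f m s" using that by (simp add: cpow_def)
        then have "f s ^ m \<in> ideal_at n X g U s" using f(2) by (auto simp: ideal_at_def)
        then show ?thesis by (auto simp: poly_radical_def)
      qed
      then show "f \<in> FRad n X g U" using f(1) by (simp add: FRad_def)
    qed
  next
    show "FRad n X g U \<subseteq> sqrt_ideal n X g U"
    proof
      fix f assume fF: "f \<in> FRad n X g U"
      then have fC: "f \<in> cpolys n X U" by (simp add: FRad_def)
      have dv: "\<exists>m. g s dvd f s ^ m" if "s \<in> U" for s
      proof -
        from fF that obtain m where "f s ^ m \<in> ideal_at n X g U s"
          by (auto simp: FRad_def poly_radical_def)
        then obtain h where "h \<in> cpolys n X U" "f s ^ m = h s * restr U g s"
          by (auto simp: ideal_at_def gen_ideal_def)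
        then have "f s ^ m = g s * h s" using restrU that by (simp add: mult.commute)
        then have "g s dvd f s ^ m" by (rule dvdI)
        then show ?thesis by blast
      qed
      obtain B where B: "\<forall>\<alpha>\<in>Kg. \<forall>i. lk \<alpha> i < B"
      proof -
        let ?E = "\<Union>\<alpha>\<in>Kg. lk \<alpha> ` ks \<alpha>"
        have "finite ?E" using fKg by simp
        then obtain B where B: "\<forall>e\<in>?E. e < B" by (metis finite_nat_set_iff_bounded)
        have "lk \<alpha> i < Suc B" if "\<alpha> \<in> Kg" for \<alpha> i
        proof (cases "i \<in> ks \<alpha>")
          case True then show ?thesis using B that by force
        next
          case False then show ?thesis by (simp add: in_keys_iff)
        qed
        then show ?thesis using that by blast
      qed
      define D where "D = Max (insert 0 (wt B ` Kg))"
      have gdv: "g s dvd f s ^ D" if sU: "s \<in> U" for s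
      proof -
        have sX: "s \<in> topspace X" using sU UX by auto
        obtain m where m: "g s dvd f s ^ m" using dv[OF sU] by blast
        have kg: "ks (g s) \<subseteq> Kg" using sX by (auto simp: Kg_def)
        obtain \<alpha> where a: "\<alpha> \<in> ks (g s)" "g s dvd f s ^ wt B \<alpha>"
          using rad_bound[of "g s" n B "f s" m] assms(3) sX gvars B kg m by blast
        have "wt B \<alpha> \<le> D" using a(1) kg fKg by (auto simp: D_def)
        then have "f s ^ wt B \<alpha> dvd f s ^ D" by (rule le_imp_power_dvd)
        then show ?thesis using a(2) dvd_trans by blast
      qed
      define Q where "Q s = (if s \<in> U then (SOME q. f s ^ D = g s * q) else 0)" for s
      have FQ: "f s ^ D = g s * Q s" if "s \<in> U" for s
      proof -
        have "\<exists>q. f s ^ D = g s * q" using gdv[OF that] by (auto simp: dvd_def)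
        then have "f s ^ D = g s * (SOME q. f s ^ D = g s * q)" by (rule someI_ex)
        then show ?thesis using that unfolding Q_def by simp
      qed
      define Kf where "Kf = (\<Union>s\<in>U. ks (f s))"
      have fKf: "finite Kf" using fC by (simp add: cpolys_def Kf_def)
      have fc: "\<forall>\<alpha>. continuous_map T euclidean (\<lambda>s. lk (f s) \<alpha>)"
        using fC by (simp add: cpolys_def T_def)
      have fvars: "\<forall>s\<in>U. \<forall>\<alpha>\<in>ks (f s). ks \<alpha> \<subseteq> {..<n}"
        using fC by (simp add: cpolys_def in_vars_iff)
      obtain K' where K': "finite K'" "\<forall>s\<in>topspace T. ks (f s ^ D) \<subseteq> K'"
        "\<forall>\<alpha>. continuous_map T euclidean (\<lambda>s. lk (f s ^ D) \<alpha>)"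
        using cont_power[OF fKf _ fc, of D] tT by (auto simp: Kf_def)
      define N where "N = Max (insert 0 (wtw (\<lambda>i. 1) ` K'))"
      define V where "V = Vset n N"
      have QV: "ks (Q s) \<subseteq> V" if "s \<in> U" for s
      proof -
        have "\<forall>\<alpha>\<in>ks (f s ^ D). \<alpha> \<in> Vset n N"
        proof
          fix \<alpha> assume a: "\<alpha> \<in> ks (f s ^ D)"
          then have "\<alpha> \<in> K'" using K'(2) tT that by auto
          then have "wtw (\<lambda>i. 1) \<alpha> \<le> N" using K'(1) by (auto simp: N_def)
          moreover have "ks \<alpha> \<subseteq> {..<n}" using vars_power[of "f s" n D] fvars that a by blast
          ultimately show "\<alpha> \<in> Vset n N" by (simp add: Vset_def)
        qed
        moreover have "g s \<noteq> 0" using assms(3) UX that by auto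
        ultimately show ?thesis unfolding V_def by (intro quot_in_Vset[OF FQ[OF that]]) auto
      qed
      have Qc: "continuous_map T euclidean (\<lambda>s. lk (Q s) \<alpha>)" for \<alpha>
      proof (rule quot_cont[of T "\<lambda>s. f s ^ D" g Q V Kg K'])
        show "\<forall>s\<in>topspace T. f s ^ D = g s * Q s" using FQ tT by simp
        show "\<forall>s\<in>topspace T. g s \<noteq> 0" using assms(3) UX tT by auto
        show "finite V" by (simp add: V_def finite_Vset)
        show "\<forall>s\<in>topspace T. ks (Q s) \<subseteq> V" using QV tT by simp
        show "finite Kg" by (rule fKg)
        show "\<forall>s\<in>topspace T. ks (g s) \<subseteq> Kg" using tT UX by (auto simp: Kg_def)
      qed (use K' gc in auto)
      have QC: "Q \<in> cpolys n X U"
      proof -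
        have "(\<Union>s\<in>U. ks (Q s)) \<subseteq> V" using QV by auto
        then have "finite (\<Union>s\<in>U. ks (Q s))" by (rule finite_subset) (simp add: V_def finite_Vset)
        moreover have "in_vars n (Q s)" if "s \<in> U" for s
          using QV[OF that] by (auto simp: in_vars_iff V_def Vset_def)
        ultimately show ?thesis using Qc by (auto simp: cpolys_def Q_def T_def)
      qed
      have "cpow U f D = (\<lambda>s. Q s * restr U g s)"
      proof
        fix s show "cpow U f D s = Q s * restr U g s"
          by (cases "s \<in> U") (simp_all add: cpow_def restr_def FQ mult.commute)
      qed
      then have "cpow U f D \<in> gen_ideal n X g U" using QC by (auto simp: gen_ideal_def)
      then show "f \<in> sqrt_ideal n X g U" using fC by (auto simp: sqrt_ideal_def)
    qed
  qed
qed


end
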